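(* Assume the stationary generator setting described in the context, and let $k\ge1$. Then $$H(R_0\mid Y_{1:k},R_k)-H(R_k\mid Y_{1:k},R_0)+\zeta_R(k)=I\big(\overleftarrow Y;R_0\,\big|\,\overrightarrow Y,R_k\big).$$ Consequently, for any random variable $X_{\rm dflt}$ on a finite alphabet with $X_{\rm dflt}^{\otimes k}$ ($k$ i.i.d. copies) independent of $R_0$, $$H\big(R_0,X_{\rm dflt}^{\otimes k}\big)-H\big(R_k,Y_{1:k}\big)=k\big[H(X_{\rm dflt})-h_Y\big]+I\big(\overleftarrow Y;R_0\,\big|\,\overrightarrow Y,R_k\big)\;\ge\;k\big[H(X_{\rm dflt})-h_Y\big].$$
   Context: Stationary generator setting: $\mathcal Y$ and $\mathcal R$ are finite sets. $(Y_t,R_t)_{t\in\mathbb Z}$ is a jointly stationary (shift-invariant) bi-infinite stochastic process with $Y_t\in\mathcal Y$ (the pattern) and $R_t\in\mathcal R$ (the memory state of the device after $Y_t$ has been produced). Generator condition: for every $t$, the collection $\big((Y_s)_{s\le t},(R_s)_{s<t}\big)$ is conditionally independent of $\big((Y_s)_{s>t},(R_s)_{s>t}\big)$ given $R_t$. Notation: $Y_{a:b}=(Y_a,\dots,Y_b)$; the past is $\overleftarrow{Y}=(\dots,Y_{-1},Y_0)$ and the future is $\overrightarrow{Y}=(Y_1,Y_2,\dots)$. Information quantities involving $\overleftarrow Y$ or $\overrightarrow Y$ are defined as limits $L\to\infty$ of the corresponding quantities with $Y_{-L+1:0}$ resp. $Y_{1:L}$. $H$ denotes Shannon entropy, $I(A;B\mid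 C)=H(A\mid C)-H(A\mid B,C)$ is conditional mutual information. The entropy rate is $h_Y=H(Y_1\mid\overleftarrow Y)$. The oracular information is $\zeta_R(k):=I(Y_{1:k};R_0\mid\overleftarrow Y)$. The quantity $I(\overleftarrow Y;R_0\mid\overrightarrow Y,R_k)$ is called the discarded cryptic information. *)

theory Defs
  imports "HOL-Probability.Probability"
begin

definition ent :: "'w measure \<Rightarrow> ('w \<Rightarrow> 'a) \<Rightarrow> real" where
  "ent M X = - (\<Sum>x \<in> X ` space M.
       measure M {w \<in> space M. X w = x} * log 2 (measure M {w \<in> space M. X w = x}))"

definition cond_ent :: "'w measure \<Rightarrow> ('w \<Rightarrow> 'a) \<Rightarrow> ('w \<Rightarrow> 'b) \<Rightarrow> real" where
  "cond_ent M A B = ent M (\<lambda>w. (A w, B w)) - ent M B"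

definition cmi :: "'w measure \<Rightarrow> ('w \<Rightarrow> 'a) \<Rightarrow> ('w \<Rightarrow> 'b) \<Rightarrow> ('w \<Rightarrow> 'c) \<Rightarrow> real" where
  "cmi M A B C = cond_ent M A C - cond_ent M A (\<lambda>w. (B w, C w))"

definition ywin :: "(int \<Rightarrow> 'w \<Rightarrow> 'y) \<Rightarrow> int \<Rightarrow> nat \<Rightarrow> 'w \<Rightarrow> 'y list" where
  "ywin Y a n w = map (\<lambda>i. Y (a + int i) w) [0..<n]"

definition cond_indep :: "'w measure \<Rightarrow> 'a measure \<Rightarrow> ('w \<Rightarrow> 'a) \<Rightarrow> 'b measure \<Rightarrow> ('w \<Rightarrow> 'b)
    \<Rightarrow> ('w \<Rightarrow> 'c) \<Rightarrow> bool" where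
  "cond_indep M MA A MB B Z \<longleftrightarrow>
     (\<forall>S\<in>sets MA. \<forall>T\<in>sets MB. \<forall>z.
        measure M {w \<in> space M. A w \<in> S \<and> B w \<in> T \<and> Z w = z} * measure M {w \<in> space M. Z w = z}
      = measure M {w \<in> space M. A w \<in> S \<and> Z w = z} * measure M {w \<in> space M. B w \<in> T \<and> Z w = z})"

definition indep_disc :: "'w measure \<Rightarrow> ('w \<Rightarrow> 'a) \<Rightarrow> ('w \<Rightarrow> 'b) \<Rightarrow> bool" where
  "indep_disc M A B \<longleftrightarrow> (\<forall>a b.
     measure M {w \<in> space M. A w = a \<and> B w = b}
       = measure M {w \<in> space M. A w = a} * measure M {w \<in> space M. B w = b})"

definition jointly_stationary :: "'w measure \<Rightarrow> (int \<Rightarrow> 'w \<Rightarrow> 'y) \<Rightarrow> (int \<Rightarrow> 'w \<Rightarrow> 'r) \<Rightarrow> bool" where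
  "jointly_stationary M Y R \<longleftrightarrow>
     distr M (PiM UNIV (\<lambda>_. count_space UNIV)) (\<lambda>w t. (Y t w, R t w))
   = distr M (PiM UNIV (\<lambda>_. count_space UNIV)) (\<lambda>w t. (Y (t + 1) w, R (t + 1) w))"

definition generator_cond :: "'w measure \<Rightarrow> (int \<Rightarrow> 'w \<Rightarrow> 'y) \<Rightarrow> (int \<Rightarrow> 'w \<Rightarrow> 'r) \<Rightarrow> bool" where
  "generator_cond M Y R \<longleftrightarrow> (\<forall>t::int.
     cond_indep M
       (PiM {..t} (\<lambda>_. count_space UNIV) \<Otimes>\<^sub>M PiM {..<t} (\<lambda>_. count_space UNIV))
       (\<lambda>w. (restrict (\<lambda>s. Y s w) {..t}, restrict (\<lambda>s. R s w) {..<t}))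
       (PiM {t<..} (\<lambda>_. count_space UNIV) \<Otimes>\<^sub>M PiM {t<..} (\<lambda>_. count_space UNIV))
       (\<lambda>w. (restrict (\<lambda>s. Y s w) {t<..}, restrict (\<lambda>s. R s w) {t<..}))
       (R t))"

definition entropy_rate :: "'w measure \<Rightarrow> (int \<Rightarrow> 'w \<Rightarrow> 'y) \<Rightarrow> real" where
  "entropy_rate M Y = lim (\<lambda>L. cond_ent M (Y 1) (ywin Y (1 - int L) L))"

definition oracular_info :: "'w measure \<Rightarrow> (int \<Rightarrow> 'w \<Rightarrow> 'y) \<Rightarrow> (int \<Rightarrow> 'w \<Rightarrow> 'r) \<Rightarrow> nat \<Rightarrow> real" where
  "oracular_info M Y R k = lim (\<lambda>L. cmi M (ywin Y 1 k) (R 0) (ywin Y (1 - int L) L))"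

text \<open>Discarded cryptic information I(past; R_0 | future, R_k)
  = lim_L I(Y_{-L+1:0}; R_0 | Y_{1:L}, R_k).\<close>
definition discarded_cryptic :: "'w measure \<Rightarrow> (int \<Rightarrow> 'w \<Rightarrow> 'y) \<Rightarrow> (int \<Rightarrow> 'w \<Rightarrow> 'r) \<Rightarrow> nat \<Rightarrow> real" where
  "discarded_cryptic M Y R k =
     lim (\<lambda>L. cmi M (ywin Y (1 - int L) L) (R 0) (\<lambda>w. (ywin Y 1 L w, R (int k) w)))"

end

theory Submission
  imports Defs
begin

definition pr :: "'w measure \<Rightarrow> ('w \<Rightarrow> 'a) \<Rightarrow> 'a \<Rightarrow> real" where
  "pr M X x = measure M (X -` {x} \<inter> space M)"

lemma ent_pr: "ent M X = -(\<Sum>x\<in>X`space M. pr M X x * log 2 (pr M X x))"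
proof -
  have "\<And>x. {w \<in> space M. X w = x} = X -` {x} \<inter> space M" by auto
  then show ?thesis unfolding ent_def pr_def by simp
qed

lemma ent_cong: "(\<And>w. w \<in> space M \<Longrightarrow> X w = X' w) \<Longrightarrow> ent M X = ent M X'"
proof -
  assume h: "\<And>w. w \<in> space M \<Longrightarrow> X w = X' w"
  have "X ` space M = X' ` space M" using h by (auto simp: image_def)
  moreover have "\<And>x. {w \<in> space M. X w = x} = {w \<in> space M. X' w = x}" using h by auto
  ultimately show ?thesis unfolding ent_def by simp
qed

lemma pr_nonneg: "0 \<le> pr M X x" unfolding pr_def by simp

context prob_space begin

lemma pr_sum:
  assumes V: "simple_function M V"
  shows "pr M (\<lambda>w. f (V w)) y = (\<Sum>v\<in>{v\<in>V`space M. f v = y}. pr M V v)"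
proof -
  have eq: "(\<lambda>w. f (V w)) -` {y} \<inter> space M = (\<Union>v\<in>{v\<in>V`space M. f v = y}. V -` {v} \<inter> space M)"
    by auto
  have "measure M (\<Union>v\<in>{v\<in>V`space M. f v = y}. V -` {v} \<inter> space M)
      = (\<Sum>v\<in>{v\<in>V`space M. f v = y}. measure M (V -` {v} \<inter> space M))"
    apply (rule finite_measure_finite_Union)
    using simple_functionD[OF V] by (auto simp: disjoint_family_on_def)
  then show ?thesis unfolding pr_def eq by simp
qed

lemma ent_expect:
  assumes V: "simple_function M V"
  shows "ent M (\<lambda>w. f (V w)) = -(\<Sum>v\<in>V`space M. pr M V v * log 2 (pr M (\<lambda>w. f (V w)) (f v)))"
proof -
  let ?S = "V ` space M"
  have fin: "finite ?S" using simple_functionD[OF V] by simp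
  have img: "(\<lambda>w. f (V w)) ` space M = f ` ?S" by auto
  have "(\<Sum>v\<in>?S. pr M V v * log 2 (pr M (\<lambda>w. f (V w)) (f v)))
      = (\<Sum>y\<in>f ` ?S. \<Sum>v\<in>{v. v \<in> ?S \<and> f v = y}. pr M V v * log 2 (pr M (\<lambda>w. f (V w)) (f v)))"
    by (rule sum.image_gen[OF fin])
  also have "\<dots> = (\<Sum>y\<in>f ` ?S. (\<Sum>v\<in>{v. v \<in> ?S \<and> f v = y}. pr M V v) * log 2 (pr M (\<lambda>w. f (V w)) y))"
    by (rule sum.cong) (auto simp: sum_distrib_right)
  also have "\<dots> = (\<Sum>y\<in>f ` ?S. pr M (\<lambda>w. f (V w)) y * log 2 (pr M (\<lambda>w. f (V w)) y))"
    using pr_sum[OF V, of f] by simp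
  finally show ?thesis unfolding ent_pr[of M "\<lambda>w. f (V w)"] img by simp
qed

lemma ent_expect_id:
  assumes V: "simple_function M V"
  shows "ent M V = -(\<Sum>v\<in>V`space M. pr M V v * log 2 (pr M V v))"
  by (rule ent_pr)

lemma pr_le_fun:
  assumes V: "simple_function M V"
  shows "pr M V v \<le> pr M (\<lambda>w. f (V w)) (f v)"
proof -
  have "simple_function M (f \<circ> V)" using V by simp
  then have "(\<lambda>w. f (V w)) -` {f v} \<inter> space M \<in> sets M"
    using simple_functionD(2) by (simp add: comp_def)
  then show ?thesis unfolding pr_def by (intro finite_measure_mono) auto
qed

lemma pr_pos_fun:
  assumes V: "simple_function M V" and "pr M V v \<noteq> 0"
  shows "0 < pr M (\<lambda>w. f (V w)) (f v)"
  using pr_le_fun[OF V, of v f] pr_nonneg[of M V v] assms(2) by linarith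

end

context prob_space begin

lemma ent_ci:
  assumes A: "simple_function M A" and B: "simple_function M B" and Z: "simple_function M Z"
    and fac: "\<And>a b z. pr M (\<lambda>w. (A w, B w, Z w)) (a, b, z) * pr M Z z
                 = pr M (\<lambda>w. (A w, Z w)) (a, z) * pr M (\<lambda>w. (B w, Z w)) (b, z)"
  shows "ent M (\<lambda>w. (A w, B w, Z w)) + ent M Z = ent M (\<lambda>w. (A w, Z w)) + ent M (\<lambda>w. (B w, Z w))"
proof -
  define V where "V = (\<lambda>w. (A w, B w, Z w))"
  have sV: "simple_function M V" unfolding V_def using A B Z by simp
  let ?S = "V ` space M"
  have e1: "ent M V = -(\<Sum>v\<in>?S. pr M V v * log 2 (pr M V v))" by (rule ent_pr)
  have e2: "ent M Z = -(\<Sum>v\<in>?S. pr M V v * log 2 (pr M Z (snd (snd v))))"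
    using ent_expect[OF sV, of "\<lambda>v. snd (snd v)"] by (simp add: V_def)
  have e3: "ent M (\<lambda>w. (A w, Z w)) = -(\<Sum>v\<in>?S. pr M V v * log 2 (pr M (\<lambda>w. (A w, Z w)) (fst v, snd (snd v))))"
    using ent_expect[OF sV, of "\<lambda>v. (fst v, snd (snd v))"] by (simp add: V_def)
  have e4: "ent M (\<lambda>w. (B w, Z w)) = -(\<Sum>v\<in>?S. pr M V v * log 2 (pr M (\<lambda>w. (B w, Z w)) (fst (snd v), snd (snd v))))"
    using ent_expect[OF sV, of "\<lambda>v. (fst (snd v), snd (snd v))"] by (simp add: V_def)
  have pt: "pr M V v * log 2 (pr M V v) + pr M V v * log 2 (pr M Z (snd (snd v)))
      = pr M V v * log 2 (pr M (\<lambda>w. (A w, Z w)) (fst v, snd (snd v)))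
        + pr M V v * log 2 (pr M (\<lambda>w. (B w, Z w)) (fst (snd v), snd (snd v)))" for v
  proof (cases "pr M V v = 0")
    case True then show ?thesis by simp
  next
    case False
    obtain a b z where v: "v = (a, b, z)" by (cases v) auto
    have p0: "0 < pr M V v" using False pr_nonneg[of M V v] by linarith
    have p1: "0 < pr M Z z" using pr_pos_fun[OF sV False, of "\<lambda>v. snd (snd v)"] by (simp add: V_def v)
    have p2: "0 < pr M (\<lambda>w. (A w, Z w)) (a, z)"
      using pr_pos_fun[OF sV False, of "\<lambda>v. (fst v, snd (snd v))"] by (simp add: V_def v)
    have p3: "0 < pr M (\<lambda>w. (B w, Z w)) (b, z)"
      using pr_pos_fun[OF sV False, of "\<lambda>v. (fst (snd v), snd (snd v))"] by (simp add: V_def v)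
    have "log 2 (pr M V v * pr M Z z) = log 2 (pr M (\<lambda>w. (A w, Z w)) (a, z) * pr M (\<lambda>w. (B w, Z w)) (b, z))"
      using fac[of a b z] by (simp add: V_def v)
    then have "log 2 (pr M V v) + log 2 (pr M Z z) = log 2 (pr M (\<lambda>w. (A w, Z w)) (a, z)) + log 2 (pr M (\<lambda>w. (B w, Z w)) (b, z))"
      using p0 p1 p2 p3 by (simp add: log_mult)
    then show ?thesis by (simp add: v distrib_left[symmetric])
  qed
  have "(\<Sum>v\<in>?S. pr M V v * log 2 (pr M V v)) + (\<Sum>v\<in>?S. pr M V v * log 2 (pr M Z (snd (snd v))))
      = (\<Sum>v\<in>?S. pr M V v * log 2 (pr M (\<lambda>w. (A w, Z w)) (fst v, snd (snd v))))
        + (\<Sum>v\<in>?S. pr M V v * log 2 (pr M (\<lambda>w. (B w, Z w)) (fst (snd v), snd (snd v))))"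
    unfolding sum.distrib[symmetric] using pt by (intro sum.cong) auto
  then show ?thesis using e1 e2 e3 e4 unfolding V_def by linarith
qed

lemma ent_indep:
  assumes A: "simple_function M A" and B: "simple_function M B"
    and fac: "\<And>a b. pr M (\<lambda>w. (A w, B w)) (a, b) = pr M A a * pr M B b"
  shows "ent M (\<lambda>w. (A w, B w)) = ent M A + ent M B"
proof -
  define V where "V = (\<lambda>w. (A w, B w))"
  have sV: "simple_function M V" unfolding V_def using A B by simp
  let ?S = "V ` space M"
  have e1: "ent M V = -(\<Sum>v\<in>?S. pr M V v * log 2 (pr M V v))" by (rule ent_pr)
  have e2: "ent M A = -(\<Sum>v\<in>?S. pr M V v * log 2 (pr M A (fst v)))"
    using ent_expect[OF sV, of "fst"] by (simp add: V_def)
  have e3: "ent M B = -(\<Sum>v\<in>?S. pr M V v * log 2 (pr M B (snd v)))"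
    using ent_expect[OF sV, of "snd"] by (simp add: V_def)
  have pt: "pr M V v * log 2 (pr M V v) = pr M V v * log 2 (pr M A (fst v)) + pr M V v * log 2 (pr M B (snd v))" for v
  proof (cases "pr M V v = 0")
    case True then show ?thesis by simp
  next
    case False
    obtain a b where v: "v = (a, b)" by (cases v) auto
    have p2: "0 < pr M A a" using pr_pos_fun[OF sV False, of fst] by (simp add: V_def v)
    have p3: "0 < pr M B b" using pr_pos_fun[OF sV False, of snd] by (simp add: V_def v)
    have "log 2 (pr M V v) = log 2 (pr M A a) + log 2 (pr M B b)"
      using fac[of a b] p2 p3 by (simp add: V_def v log_mult)
    then show ?thesis by (simp add: v distrib_left[symmetric])
  qed
  have "(\<Sum>v\<in>?S. pr M V v * log 2 (pr M V v)) = (\<Sum>v\<in>?S. pr M V v * log 2 (pr M A (fst v))) + (\<Sum>v\<in>?S. pr M V v * log 2 (pr M B (snd v)))"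
    unfolding sum.distrib[symmetric] using pt by (intro sum.cong) auto
  then show ?thesis using e1 e2 e3 unfolding V_def by linarith
qed

lemma cond_ent_nonneg:
  assumes A: "simple_function M A" and B: "simple_function M B"
  shows "0 \<le> cond_ent M A B"
proof -
  define V where "V = (\<lambda>w. (A w, B w))"
  have sV: "simple_function M V" unfolding V_def using A B by simp
  let ?S = "V ` space M"
  have e1: "ent M V = -(\<Sum>v\<in>?S. pr M V v * log 2 (pr M V v))" by (rule ent_pr)
  have e3: "ent M B = -(\<Sum>v\<in>?S. pr M V v * log 2 (pr M B (snd v)))"
    using ent_expect[OF sV, of "snd"] by (simp add: V_def)
  have pt: "pr M V v * log 2 (pr M V v) \<le> pr M V v * log 2 (pr M B (snd v))" for v
  proof (cases "pr M V v = 0")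
    case True then show ?thesis by simp
  next
    case False
    have p0: "0 < pr M V v" using False pr_nonneg[of M V v] by linarith
    have "pr M V v \<le> pr M B (snd v)" using pr_le_fun[OF sV, of v snd] by (simp add: V_def)
    then have "log 2 (pr M V v) \<le> log 2 (pr M B (snd v))" using p0 by simp
    then show ?thesis using p0 by (simp add: mult_left_mono)
  qed
  have "(\<Sum>v\<in>?S. pr M V v * log 2 (pr M V v)) \<le> (\<Sum>v\<in>?S. pr M V v * log 2 (pr M B (snd v)))"
    using pt by (intro sum_mono) auto
  then show ?thesis using e1 e3 unfolding cond_ent_def V_def by linarith
qed

lemma cmi_nonneg:
  assumes A: "simple_function M A" and B: "simple_function M B" and C: "simple_function M C"
  shows "0 \<le> cmi M A B C"
proof -
  interpret information_space M 2 by standard simp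
  define V where "V = (\<lambda>w. (A w, B w, C w))"
  have sV: "simple_function M V" unfolding V_def using A B C by simp
  let ?S = "V ` space M"
  note sd = simple_distributedI[OF _ pr_nonneg, unfolded pr_def[symmetric], OF _ refl]
  have I: "conditional_mutual_information 2 (count_space (A`space M)) (count_space (B`space M)) (count_space (C`space M)) A B C = (\<Sum>(x, y, z)\<in>?S. pr M V (x,y,z) * log 2 (pr M V (x,y,z) /
       (pr M (\<lambda>w. (A w, C w)) (x, z) * (pr M (\<lambda>w. (B w, C w)) (y,z) / pr M C z))))"
    unfolding V_def
    by (rule conditional_mutual_information_eq) (rule sd; use A B C in simp)+
  have I0: "0 \<le> conditional_mutual_information 2 (count_space (A`space M)) (count_space (B`space M)) (count_space (C`space M)) A B C" by (rule conditional_mutual_information_nonneg[OF A B C])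
  have e1: "ent M V = -(\<Sum>v\<in>?S. pr M V v * log 2 (pr M V v))" by (rule ent_pr)
  have e2: "ent M C = -(\<Sum>v\<in>?S. pr M V v * log 2 (pr M C (snd (snd v))))"
    using ent_expect[OF sV, of "\<lambda>v. snd (snd v)"] by (simp add: V_def)
  have e3: "ent M (\<lambda>w. (A w, C w)) = -(\<Sum>v\<in>?S. pr M V v * log 2 (pr M (\<lambda>w. (A w, C w)) (fst v, snd (snd v))))"
    using ent_expect[OF sV, of "\<lambda>v. (fst v, snd (snd v))"] by (simp add: V_def)
  have e4: "ent M (\<lambda>w. (B w, C w)) = -(\<Sum>v\<in>?S. pr M V v * log 2 (pr M (\<lambda>w. (B w, C w)) (fst (snd v), snd (snd v))))"
    using ent_expect[OF sV, of "\<lambda>v. (fst (snd v), snd (snd v))"] by (simp add: V_def)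
  have pt: "(case v of (x, y, z) \<Rightarrow> pr M V (x,y,z) * log 2 (pr M V (x,y,z) /
       (pr M (\<lambda>w. (A w, C w)) (x, z) * (pr M (\<lambda>w. (B w, C w)) (y,z) / pr M C z))))
      = pr M V v * log 2 (pr M V v) + pr M V v * log 2 (pr M C (snd (snd v)))
      - pr M V v * log 2 (pr M (\<lambda>w. (A w, C w)) (fst v, snd (snd v)))
        - pr M V v * log 2 (pr M (\<lambda>w. (B w, C w)) (fst (snd v), snd (snd v)))" for v
  proof -
    obtain a b z where v: "v = (a, b, z)" by (cases v) auto
    show ?thesis
    proof (cases "pr M V v = 0")
      case True then show ?thesis by (simp add: v)
    next
      case False
      have p0: "0 < pr M V v" using False pr_nonneg[of M V v] by linarith
      have p1: "0 < pr M C z" using pr_pos_fun[OF sV False, of "\<lambda>v. snd (snd v)"] by (simp add: V_def v)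
      have p2: "0 < pr M (\<lambda>w. (A w, C w)) (a, z)"
        using pr_pos_fun[OF sV False, of "\<lambda>v. (fst v, snd (snd v))"] by (simp add: V_def v)
      have p3: "0 < pr M (\<lambda>w. (B w, C w)) (b, z)"
        using pr_pos_fun[OF sV False, of "\<lambda>v. (fst (snd v), snd (snd v))"] by (simp add: V_def v)
      have "log 2 (pr M V v / (pr M (\<lambda>w. (A w, C w)) (a, z) * (pr M (\<lambda>w. (B w, C w)) (b, z) / pr M C z)))
        = log 2 (pr M V v) + log 2 (pr M C z) - log 2 (pr M (\<lambda>w. (A w, C w)) (a, z)) - log 2 (pr M (\<lambda>w. (B w, C w)) (b, z))"
        using p0 p1 p2 p3 by (simp add: log_divide log_mult)
      from arg_cong[OF this, of "\<lambda>x. pr M V v * x"]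
      have X: "pr M V v * log 2 (pr M V v / (pr M (\<lambda>w. (A w, C w)) (a, z) * (pr M (\<lambda>w. (B w, C w)) (b, z) / pr M C z)))
        = pr M V v * log 2 (pr M V v) + pr M V v * log 2 (pr M C z) - pr M V v * log 2 (pr M (\<lambda>w. (A w, C w)) (a, z)) - pr M V v * log 2 (pr M (\<lambda>w. (B w, C w)) (b, z))"
        by (simp only: ring_distribs)
      show ?thesis unfolding v case_prod_conv prod.sel using X[unfolded v] by linarith
    qed
  qed
  have "conditional_mutual_information 2 (count_space (A`space M)) (count_space (B`space M)) (count_space (C`space M)) A B C = (\<Sum>v\<in>?S. pr M V v * log 2 (pr M V v)) + (\<Sum>v\<in>?S. pr M V v * log 2 (pr M C (snd (snd v))))
      - (\<Sum>v\<in>?S. pr M V v * log 2 (pr M (\<lambda>w. (A w, C w)) (fst v, snd (snd v))))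
      - (\<Sum>v\<in>?S. pr M V v * log 2 (pr M (\<lambda>w. (B w, C w)) (fst (snd v), snd (snd v))))"
    unfolding I sum.distrib[symmetric] sum_subtractf[symmetric] using pt by (intro sum.cong) auto
  then show ?thesis using I0 e1 e2 e3 e4 unfolding cmi_def cond_ent_def V_def by linarith
qed

end

lemma meas_pair:
  fixes f :: "'w \<Rightarrow> 'a::countable" and g :: "'w \<Rightarrow> 'b::countable"
  assumes "f \<in> measurable M (count_space UNIV)" "g \<in> measurable M (count_space UNIV)"
  shows "(\<lambda>w. (f w, g w)) \<in> measurable M (count_space UNIV)"
proof -
  have "(\<lambda>w. (f w, g w)) \<in> measurable M (count_space UNIV \<Otimes>\<^sub>M count_space UNIV)"
    using assms by (rule measurable_Pair)
  then show ?thesis by (simp add: pair_measure_countable)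
qed

lemma meas_list:
  fixes g :: "nat \<Rightarrow> 'w \<Rightarrow> 'a::countable"
  assumes "\<And>i. i < n \<Longrightarrow> g i \<in> measurable M (count_space UNIV)"
  shows "(\<lambda>w. map (\<lambda>i. g i w) [0..<n]) \<in> measurable M (count_space UNIV)"
  using assms
proof (induction n)
  case 0 then show ?case by simp
next
  case (Suc n)
  have p: "(\<lambda>w. (map (\<lambda>i. g i w) [0..<n], g n w)) \<in> measurable M (count_space UNIV)"
    using Suc by (intro meas_pair) auto
  have "(\<lambda>w. (\<lambda>(xs, x). xs @ [x]) (map (\<lambda>i. g i w) [0..<n], g n w)) \<in> measurable M (count_space UNIV)"
    by (rule measurable_compose[OF p measurable_count_space])
  then show ?case by simp
qed

lemma sf_of:
  assumes "f \<in> measurable M (count_space UNIV)" "finite (f ` space M)"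
  shows "simple_function M f"
  using assms unfolding simple_function_def by (auto intro: measurable_sets)

lemma finite_list_img:
  fixes g :: "nat \<Rightarrow> 'w \<Rightarrow> 'a::finite"
  shows "finite ((\<lambda>w. map (\<lambda>i. g i w) [0..<n]) ` S)"
proof -
  have "finite {xs::'a list. set xs \<subseteq> UNIV \<and> length xs = n}" by (rule finite_lists_length_eq) simp
  then show ?thesis by (rule finite_subset[rotated]) auto
qed

lemma sf_list:
  fixes g :: "nat \<Rightarrow> 'w \<Rightarrow> 'a::finite"
  assumes "\<And>i. i < n \<Longrightarrow> g i \<in> measurable M (count_space UNIV)"
  shows "simple_function M (\<lambda>w. map (\<lambda>i. g i w) [0..<n])"
  by (rule sf_of[OF meas_list[OF assms] finite_list_img])

lemma sf_fin:
  fixes f :: "'w \<Rightarrow> 'a::finite"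
  assumes "f \<in> measurable M (count_space UNIV)"
  shows "simple_function M f"
  by (rule sf_of[OF assms]) simp

lemma ent_superset:
  assumes "finite T" "X ` space M \<subseteq> T"
  shows "ent M X = -(\<Sum>x\<in>T. pr M X x * log 2 (pr M X x))"
proof -
  have "(\<Sum>x\<in>X ` space M. pr M X x * log 2 (pr M X x)) = (\<Sum>x\<in>T. pr M X x * log 2 (pr M X x))"
  proof (rule sum.mono_neutral_left[OF assms(1) assms(2)])
    show "\<forall>i\<in>T - X ` space M. pr M X i * log 2 (pr M X i) = 0"
    proof
      fix i assume "i \<in> T - X ` space M"
      then have "X -` {i} \<inter> space M = {}" by auto
      then show "pr M X i * log 2 (pr M X i) = 0" unfolding pr_def by simp
    qed
  qed
  then show ?thesis unfolding ent_pr by simp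
qed

lemma ent_distr:
  assumes X: "simple_function M X" and X': "simple_function M X'"
    and d: "distr M (count_space UNIV) X = distr M (count_space UNIV) X'"
  shows "ent M X = ent M X'"
proof -
  have p: "pr M X x = pr M X' x" for x
  proof -
    have "pr M X x = measure (distr M (count_space UNIV) X) {x}"
      unfolding pr_def by (simp add: measure_distr measurable_simple_function[OF X])
    also have "\<dots> = measure (distr M (count_space UNIV) X') {x}" by (simp add: d)
    also have "\<dots> = pr M X' x"
      unfolding pr_def by (simp add: measure_distr measurable_simple_function[OF X'])
    finally show ?thesis .
  qed
  let ?T = "X ` space M \<union> X' ` space M"
  have fT: "finite ?T" using simple_functionD(1)[OF X] simple_functionD(1)[OF X'] by simp
  have e1: "ent M X = -(\<Sum>x\<in>?T. pr M X x * log 2 (pr M X x))" by (rule ent_superset[OF fT]) auto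
  have e2: "ent M X' = -(\<Sum>x\<in>?T. pr M X' x * log 2 (pr M X' x))" by (rule ent_superset[OF fT]) auto
  show ?thesis unfolding e1 e2 p ..

qed

context prob_space begin

lemma ent_relabel:
  assumes Z: "simple_function M Z"
    and h1: "\<And>w. w \<in> space M \<Longrightarrow> X w = g (Z w)"
    and h2: "\<And>w. w \<in> space M \<Longrightarrow> Z w = h (X w)"
  shows "ent M X = ent M Z"
proof -
  have "ent M X = ent M (\<lambda>w. g (Z w))" using h1 by (rule ent_cong)
  also have "\<dots> = -(\<Sum>z\<in>Z`space M. pr M Z z * log 2 (pr M (\<lambda>w. g (Z w)) (g z)))"
    by (rule ent_expect[OF Z])
  also have "\<dots> = -(\<Sum>z\<in>Z`space M. pr M Z z * log 2 (pr M Z z))"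
  proof -
    have "pr M (\<lambda>w. g (Z w)) (g z) = pr M Z z" if z: "z \<in> Z ` space M" for z
    proof -
      obtain w0 where w0: "w0 \<in> space M" "z = Z w0" using z by auto
      have hz: "h (g z) = z" using h1[OF w0(1)] h2[OF w0(1)] w0(2) by simp
      have "\<And>w. w \<in> space M \<Longrightarrow> g (Z w) = g z \<Longrightarrow> Z w = z" using h1 h2 hz by metis
      then have "(\<lambda>w. g (Z w)) -` {g z} \<inter> space M = Z -` {z} \<inter> space M" by auto
      then show ?thesis unfolding pr_def by simp
    qed
    then show ?thesis by (intro arg_cong[where f=uminus] sum.cong) auto
  qed
  also have "\<dots> = ent M Z" by (rule ent_pr[symmetric])
  finally show ?thesis .
qed

lemma cond_ent_relabel:
  assumes A: "simple_function M A" and B': "simple_function M B'"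
    and h1: "\<And>w. w \<in> space M \<Longrightarrow> B w = g (B' w)"
    and h2: "\<And>w. w \<in> space M \<Longrightarrow> B' w = h (B w)"
  shows "cond_ent M A B = cond_ent M A B'"
proof -
  have "ent M (\<lambda>w. (A w, B w)) = ent M (\<lambda>w. (A w, B' w))"
    by (rule ent_relabel[where g="\<lambda>(a,b). (a, g b)" and h="\<lambda>(a,b). (a, h b)"]) (use A B' h1 h2 in auto)
  moreover have "ent M B = ent M B'" by (rule ent_relabel[OF B' h1 h2])
  ultimately show ?thesis unfolding cond_ent_def by simp
qed

end

lemma length_ywin[simp]: "length (ywin Y a n w) = n"
  by (simp add: ywin_def)
lemma ywin_Suc: "ywin Y a (Suc n) w = ywin Y a n w @ [Y (a + int n) w]"
  by (simp add: ywin_def)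
lemma ywin_append: "ywin Y a (m + n) w = ywin Y a m w @ ywin Y (a + int m) n w"
proof (induction n)
  case 0 then show ?case by (simp add: ywin_def)
next
  case (Suc n)
  have "ywin Y a (m + Suc n) w = ywin Y a (m + n) w @ [Y (a + int (m + n)) w]"
    by (simp only: add_Suc_right ywin_Suc)
  also have "\<dots> = ywin Y a m w @ ywin Y (a + int m) n w @ [Y (a + int m + int n) w]"
    by (simp add: Suc add.assoc)
  also have "\<dots> = ywin Y a m w @ ywin Y (a + int m) (Suc n) w"
    by (simp only: ywin_Suc append_assoc)
  finally show ?case .
qed
lemma ywin_Suc_left: "ywin Y a (Suc n) w = Y a w # ywin Y (a + 1) n w"
  using ywin_append[of Y a 1 n w] by (simp add: ywin_def)

locale gen = prob_space M for M :: "'w measure" +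
  fixes Y :: "int \<Rightarrow> 'w \<Rightarrow> 'y::finite" and R :: "int \<Rightarrow> 'w \<Rightarrow> 'r::finite"
  assumes Ym: "\<And>t. Y t \<in> measurable M (count_space UNIV)"
    and Rm: "\<And>t. R t \<in> measurable M (count_space UNIV)"
    and stat: "jointly_stationary M Y R"
    and gc: "generator_cond M Y R"
begin

abbreviation "PS \<equiv> PiM (UNIV :: int set) (\<lambda>_. count_space (UNIV :: ('y \<times> 'r) set))"

definition Zs :: "nat \<Rightarrow> 'w \<Rightarrow> int \<Rightarrow> 'y \<times> 'r" where
  "Zs n w = (\<lambda>t. (Y (t + int n) w, R (t + int n) w))"

lemma sfY: "simple_function M (Y t)" by (rule sf_fin[OF Ym])
lemma sfR: "simple_function M (R t)" by (rule sf_fin[OF Rm])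

lemma sf_ywin: "simple_function M (ywin Y a n)"
proof -
  have "simple_function M (\<lambda>w. map (\<lambda>i. Y (a + int i) w) [0..<n])" by (rule sf_list[OF Ym])
  moreover have "ywin Y a n = (\<lambda>w. map (\<lambda>i. Y (a + int i) w) [0..<n])" by (simp add: ywin_def fun_eq_iff)
  ultimately show ?thesis by simp
qed

lemma Zs_meas: "Zs n \<in> measurable M PS"
proof -
  have "(\<lambda>w t. (\<lambda>t w. (Y (t + int n) w, R (t + int n) w)) t w) \<in> measurable M PS"
    by (rule measurable_PiM_single') (auto intro: meas_pair Ym Rm)
  then show ?thesis by (simp add: Zs_def[abs_def])
qed

lemma shift_meas: "(\<lambda>z t. z (t + 1)) \<in> measurable PS PS"
proof -
  have "(\<lambda>z t. (\<lambda>t z. z (t + 1)) t z) \<in> measurable PS PS"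
    by (rule measurable_PiM_single') (auto simp: space_PiM)
  then show ?thesis by simp
qed

lemma distr_Zs: "distr M PS (Zs n) = distr M PS (Zs 0)"
proof (induction n)
  case 0 then show ?case by simp
next
  case (Suc n)
  have e: "Zs (Suc n) = (\<lambda>z t. z (t + 1)) \<circ> Zs n" for n
    by (auto simp: Zs_def fun_eq_iff algebra_simps)
  have s: "distr M PS (Zs 1) = distr M PS (Zs 0)"
    using stat unfolding jointly_stationary_def Zs_def by simp
  have "distr M PS (Zs (Suc n)) = distr (distr M PS (Zs n)) PS (\<lambda>z t. z (t + 1))"
    unfolding e by (rule distr_distr[OF shift_meas Zs_meas, symmetric])
  also have "\<dots> = distr (distr M PS (Zs 0)) PS (\<lambda>z t. z (t + 1))" by (simp add: Suc)
  also have "\<dots> = distr M PS (Zs 1)"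
    using e[of 0] by (simp add: distr_distr[OF shift_meas Zs_meas])
  finally show ?case using s by simp
qed

lemma ent_shift_gen:
  assumes F: "F \<in> measurable PS (count_space UNIV)"
    and X: "simple_function M X" and X0: "simple_function M X0"
    and hX: "\<And>w. w \<in> space M \<Longrightarrow> X w = F (Zs n w)"
    and hX0: "\<And>w. w \<in> space M \<Longrightarrow> X0 w = F (Zs 0 w)"
  shows "ent M X = ent M X0"
proof -
  have "simple_function M (\<lambda>w. F (Zs n w)) = simple_function M X" using simple_function_cong[of M "\<lambda>w. F (Zs n w)" X] hX by metis
  then have s1: "simple_function M (\<lambda>w. F (Zs n w))" using X by simp
  have "simple_function M (\<lambda>w. F (Zs 0 w)) = simple_function M X0" using simple_function_cong[of M "\<lambda>w. F (Zs 0 w)" X0] hX0 by metis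
  then have s2: "simple_function M (\<lambda>w. F (Zs 0 w))" using X0 by simp
  have d: "distr M (count_space UNIV) (\<lambda>w. F (Zs m w)) = distr (distr M PS (Zs m)) (count_space UNIV) F" for m
    unfolding distr_distr[OF F Zs_meas] by (simp add: comp_def)
  have "ent M X = ent M (\<lambda>w. F (Zs n w))" using hX by (rule ent_cong)
  also have "\<dots> = ent M (\<lambda>w. F (Zs 0 w))"
    by (rule ent_distr[OF s1 s2]) (simp only: d distr_Zs[of n])
  also have "\<dots> = ent M X0" using hX0 by (rule ent_cong[symmetric])
  finally show ?thesis .
qed

lemma meas_comp: "(\<lambda>z. z t) \<in> measurable PS (count_space UNIV)"
  by (rule measurable_component_singleton) simp

lemma meas_Fwin: "(\<lambda>z. map (\<lambda>i. fst (z (a + int i))) [0..<m]) \<in> measurable PS (count_space UNIV)"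
  by (rule meas_list) (rule measurable_compose[OF meas_comp measurable_count_space])

lemma meas_FR: "(\<lambda>z. snd (z b)) \<in> measurable PS (count_space UNIV)"
  by (rule measurable_compose[OF meas_comp measurable_count_space])

lemma ent_shift_ywin: "ent M (ywin Y (a + int n) m) = ent M (ywin Y a m)"
  by (rule ent_shift_gen[OF meas_Fwin[of a m] sf_ywin sf_ywin, where n=n])
     (auto simp: ywin_def Zs_def algebra_simps)

lemma ent_shift_ywinR:
  "ent M (\<lambda>w. (ywin Y (a + int n) m w, R (b + int n) w)) = ent M (\<lambda>w. (ywin Y a m w, R b w))"
  by (rule ent_shift_gen[OF meas_pair[OF meas_Fwin[of a m] meas_FR[of b]]
        simple_function_Pair[OF sf_ywin sfR] simple_function_Pair[OF sf_ywin sfR], where n=n])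
     (auto simp: ywin_def Zs_def algebra_simps)

end

context gen begin

abbreviation "MA t \<equiv> PiM {..t} (\<lambda>_. count_space (UNIV::'y set)) \<Otimes>\<^sub>M PiM {..<t} (\<lambda>_. count_space (UNIV::'r set))"
abbreviation "MB t \<equiv> PiM {t<..} (\<lambda>_. count_space (UNIV::'y set)) \<Otimes>\<^sub>M PiM {t<..} (\<lambda>_. count_space (UNIV::'r set))"
definition "past t w = (restrict (\<lambda>s. Y s w) {..t}, restrict (\<lambda>s. R s w) {..<t})"
definition "fut t w = (restrict (\<lambda>s. Y s w) {t<..}, restrict (\<lambda>s. R s w) {t<..})"

lemma past_space: "past t w \<in> space (MA t)"
  by (simp add: past_def space_pair_measure space_PiM)
lemma fut_space: "fut t w \<in> space (MB t)"
  by (simp add: fut_def space_pair_measure space_PiM)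

lemma ci:
  assumes G: "G \<in> measurable (MA t) (count_space UNIV)"
    and G': "G' \<in> measurable (MB t) (count_space UNIV)"
    and sA: "simple_function M A" and sB: "simple_function M B"
    and hA: "\<And>w. w \<in> space M \<Longrightarrow> A w = G (past t w)"
    and hB: "\<And>w. w \<in> space M \<Longrightarrow> B w = G' (fut t w)"
  shows "ent M (\<lambda>w. (A w, B w, R t w)) + ent M (R t) = ent M (\<lambda>w. (A w, R t w)) + ent M (\<lambda>w. (B w, R t w))"
proof (rule ent_ci[OF sA sB sfR])
  fix a b z
  define S where "S = G -` {a} \<inter> space (MA t)"
  define T where "T = G' -` {b} \<inter> space (MB t)"
  have S: "S \<in> sets (MA t)" unfolding S_def by (rule measurable_sets[OF G]) simp
  have T: "T \<in> sets (MB t)" unfolding T_def by (rule measurable_sets[OF G']) simp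
  have ci: "cond_indep M (MA t) (past t) (MB t) (fut t) (R t)"
    using gc unfolding generator_cond_def past_def[abs_def] fut_def[abs_def] by blast
  have eq: "measure M {w \<in> space M. past t w \<in> S \<and> fut t w \<in> T \<and> R t w = z} * measure M {w \<in> space M. R t w = z}
      = measure M {w \<in> space M. past t w \<in> S \<and> R t w = z} * measure M {w \<in> space M. fut t w \<in> T \<and> R t w = z}"
    using ci S T unfolding cond_indep_def by blast
  have e1: "{w \<in> space M. past t w \<in> S \<and> fut t w \<in> T \<and> R t w = z} = (\<lambda>w. (A w, B w, R t w)) -` {(a, b, z)} \<inter> space M"
    using hA hB past_space fut_space unfolding S_def T_def by auto
  have e2: "{w \<in> space M. R t w = z} = R t -` {z} \<inter> space M" by auto
  have e3: "{w \<in> space M. past t w \<in> S \<and> R t w = z} = (\<lambda>w. (A w, R t w)) -` {(a, z)} \<inter> space M"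
    using hA past_space unfolding S_def by auto
  have e4: "{w \<in> space M. fut t w \<in> T \<and> R t w = z} = (\<lambda>w. (B w, R t w)) -` {(b, z)} \<inter> space M"
    using hB fut_space unfolding T_def by auto
  show "pr M (\<lambda>w. (A w, B w, R t w)) (a, b, z) * pr M (R t) z =
        pr M (\<lambda>w. (A w, R t w)) (a, z) * pr M (\<lambda>w. (B w, R t w)) (b, z)"
    using eq unfolding pr_def e1 e2 e3 e4 .
qed

lemma meas_pastY:
  assumes "\<And>i. i < n \<Longrightarrow> a + int i \<le> t"
  shows "(\<lambda>p. map (\<lambda>i. fst p (a + int i)) [0..<n]) \<in> measurable (MA t) (count_space UNIV)"
proof (rule meas_list)
  fix i assume "i < n"
  then have "(\<lambda>x. x (a + int i)) \<in> measurable (PiM {..t} (\<lambda>_. count_space (UNIV::'y set))) (count_space UNIV)"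
    using assms by (intro measurable_component_singleton) auto
  then show "(\<lambda>p. fst p (a + int i)) \<in> measurable (MA t) (count_space UNIV)"
    by (rule measurable_compose[OF measurable_fst])
qed

lemma meas_futY:
  assumes "\<And>i. i < n \<Longrightarrow> t < a + int i"
  shows "(\<lambda>p. map (\<lambda>i. fst p (a + int i)) [0..<n]) \<in> measurable (MB t) (count_space UNIV)"
proof (rule meas_list)
  fix i assume "i < n"
  then have "(\<lambda>x. x (a + int i)) \<in> measurable (PiM {t<..} (\<lambda>_. count_space (UNIV::'y set))) (count_space UNIV)"
    using assms by (intro measurable_component_singleton) auto
  then show "(\<lambda>p. fst p (a + int i)) \<in> measurable (MB t) (count_space UNIV)"
    by (rule measurable_compose[OF measurable_fst])
qed

lemma meas_futR:
  assumes "t < s"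
  shows "(\<lambda>p. snd p s) \<in> measurable (MB t) (count_space UNIV)"
proof -
  have "(\<lambda>x. x s) \<in> measurable (PiM {t<..} (\<lambda>_. count_space (UNIV::'r set))) (count_space UNIV)"
    using assms by (intro measurable_component_singleton) auto
  then show ?thesis by (rule measurable_compose[OF measurable_snd])
qed

lemma past_ywin:
  assumes "\<And>i. i < n \<Longrightarrow> a + int i \<le> t"
  shows "ywin Y a n w = map (\<lambda>i. fst (past t w) (a + int i)) [0..<n]"
  using assms by (auto simp: ywin_def past_def)

lemma fut_ywin:
  assumes "\<And>i. i < n \<Longrightarrow> t < a + int i"
  shows "ywin Y a n w = map (\<lambda>i. fst (fut t w) (a + int i)) [0..<n]"
  using assms by (auto simp: ywin_def fut_def)

lemma fut_R: "t < s \<Longrightarrow> R s w = snd (fut t w) s"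
  by (simp add: fut_def)

lemma ci_win:
  assumes "\<And>i. i < n \<Longrightarrow> a + int i \<le> t" "\<And>i. i < m \<Longrightarrow> t < b + int i"
  shows "ent M (\<lambda>w. (ywin Y a n w, ywin Y b m w, R t w)) + ent M (R t)
       = ent M (\<lambda>w. (ywin Y a n w, R t w)) + ent M (\<lambda>w. (ywin Y b m w, R t w))"
  by (rule ci[OF meas_pastY[OF assms(1)] meas_futY[OF assms(2)] sf_ywin sf_ywin])
     (auto intro: past_ywin fut_ywin assms)

lemma ci_winR:
  assumes "\<And>i. i < n \<Longrightarrow> a + int i \<le> t" "\<And>i. i < m \<Longrightarrow> t < b + int i" "t < s"
  shows "ent M (\<lambda>w. (ywin Y a n w, (ywin Y b m w, R s w), R t w)) + ent M (R t)
       = ent M (\<lambda>w. (ywin Y a n w, R t w)) + ent M (\<lambda>w. ((ywin Y b m w, R s w), R t w))"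
  by (rule ci[OF meas_pastY[OF assms(1)] meas_pair[OF meas_futY[OF assms(2)] meas_futR[OF assms(3)]]
        sf_ywin simple_function_Pair[OF sf_ywin sfR]])
     (auto intro: past_ywin fut_ywin fut_R assms)

end

context gen begin

definition "P L = ywin Y (1 - int L) L"
definition "g L = cond_ent M (R 0) (P L)"
definition "c L = cond_ent M (Y 1) (P L)"

lemma sfP: "simple_function M (P L)" unfolding P_def by (rule sf_ywin)

lemma P_Suc: "P (Suc L) w = Y (- int L) w # P L w"
  unfolding P_def ywin_Suc_left by (simp add: algebra_simps)

lemma cond_ent_P_mono:
  assumes A: "simple_function M A"
  shows "cond_ent M A (P (Suc L)) \<le> cond_ent M A (P L)"
proof -
  have "cond_ent M A (P (Suc L)) = cond_ent M A (\<lambda>w. (Y (- int L) w, P L w))"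
    by (rule cond_ent_relabel[OF A simple_function_Pair[OF sfY sfP], where g="\<lambda>(y, p). y # p" and h="\<lambda>xs. (hd xs, tl xs)"])
       (auto simp: P_Suc)
  moreover have "0 \<le> cmi M A (Y (- int L)) (P L)" by (rule cmi_nonneg[OF A sfY sfP])
  ultimately show ?thesis unfolding cmi_def by simp
qed

lemma g_conv: obtains lg where "g \<longlonglongrightarrow> lg"
proof -
  have "decseq g" unfolding decseq_Suc_iff g_def using cond_ent_P_mono[OF sfR] by blast
  moreover have "\<forall>i. 0 \<le> g i" unfolding g_def using cond_ent_nonneg[OF sfR sfP] by blast
  ultimately show ?thesis using decseq_convergent that by blast
qed

lemma c_conv: obtains lc where "c \<longlonglongrightarrow> lc"
proof -
  have "decseq c" unfolding decseq_Suc_iff c_def using cond_ent_P_mono[OF sfY] by blast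
  moreover have "\<forall>i. 0 \<le> c i" unfolding c_def using cond_ent_nonneg[OF sfY sfP] by blast
  ultimately show ?thesis using decseq_convergent that by blast
qed

lemma tele_step: "ent M (ywin Y (1 - int L) (L + Suc m)) - ent M (ywin Y (1 - int L) (L + m)) = c (L + m)"
proof -
  have i: "1 - int (L + m) + int m = 1 - int L" by simp
  have e1: "ent M (ywin Y (1 - int L) (L + Suc m)) = ent M (ywin Y (1 - int (L + m)) (Suc (L + m)))"
    using ent_shift_ywin[of "1 - int (L + m)" m "Suc (L + m)", unfolded i] by simp
  have e2: "ent M (ywin Y (1 - int L) (L + m)) = ent M (P (L + m))"
    using ent_shift_ywin[of "1 - int (L + m)" m "L + m", unfolded i] by (simp add: P_def)
  have e3: "ent M (ywin Y (1 - int (L + m)) (Suc (L + m))) = ent M (\<lambda>w. (Y 1 w, P (L + m) w))"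
    by (rule ent_relabel[OF simple_function_Pair[OF sfY sfP], where g="\<lambda>(y, p). p @ [y]" and h="\<lambda>xs. (last xs, butlast xs)"])
       (auto simp: P_def ywin_Suc)
  show ?thesis unfolding e1 e2 e3 c_def cond_ent_def by simp
qed

lemma tele: "ent M (ywin Y (1 - int L) (L + m)) - ent M (P L) = (\<Sum>j<m. c (L + j))"
proof (induction m)
  case 0 then show ?case by (simp add: P_def)
next
  case (Suc m)
  then show ?case using tele_step[of L m] by simp
qed

end

context gen begin

lemma ent_swap:
  assumes A: "simple_function M A" and B: "simple_function M B"
  shows "ent M (\<lambda>w. (A w, B w)) = ent M (\<lambda>w. (B w, A w))"
  by (rule ent_relabel[OF simple_function_Pair[OF B A], where g="\<lambda>(b,a). (a,b)" and h="\<lambda>(a,b). (b,a)"]) auto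

definition "W k = ywin Y 1 k"
lemma sfW: "simple_function M (W k)" unfolding W_def by (rule sf_ywin)

lemma idA: "cmi M (W k) (R 0) (P L) = cond_ent M (W k) (P L) - ent M (\<lambda>w. (W k w, R 0 w)) + ent M (R 0)"
proof -
  have ci: "ent M (\<lambda>w. (P L w, W k w, R 0 w)) + ent M (R 0) = ent M (\<lambda>w. (P L w, R 0 w)) + ent M (\<lambda>w. (W k w, R 0 w))"
    unfolding P_def W_def by (rule ci_win) auto
  have r1: "ent M (\<lambda>w. (W k w, R 0 w, P L w)) = ent M (\<lambda>w. (P L w, W k w, R 0 w))"
    by (rule ent_relabel[OF simple_function_Pair[OF sfP simple_function_Pair[OF sfW sfR]],
          where g="\<lambda>(p,x,r). (x,r,p)" and h="\<lambda>(x,r,p). (p,x,r)"]) auto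
  have r2: "ent M (\<lambda>w. (R 0 w, P L w)) = ent M (\<lambda>w. (P L w, R 0 w))"
    by (rule ent_swap[OF sfR sfP])
  show ?thesis unfolding cmi_def cond_ent_def using ci r1 r2 by simp
qed

lemma idC: "cond_ent M (W k) (P L) = (\<Sum>j<k. c (L + j))"
proof -
  have "ent M (\<lambda>w. (W k w, P L w)) = ent M (ywin Y (1 - int L) (L + k))"
    by (rule ent_relabel[OF sf_ywin, where g="\<lambda>q. (drop L q, take L q)" and h="\<lambda>(x,p). p @ x"])
       (auto simp: W_def P_def ywin_append)
  then show ?thesis using tele[of L k] unfolding cond_ent_def by simp
qed

lemma idB:
  assumes kL: "k \<le> L" and k1: "1 \<le> k"
  shows "cmi M (P L) (R 0) (\<lambda>w. (ywin Y 1 L w, R (int k) w))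
     = cond_ent M (W k) (P L) + g (L + k) - g L - ent M (\<lambda>w. (W k w, R (int k) w)) + ent M (R 0)"
proof -
  define V where "V = ywin Y (1 + int k) (L - k)"
  define F where "F = ywin Y 1 L"
  define Q where "Q = ywin Y (1 - int L) (L + k)"
  have sV: "simple_function M V" unfolding V_def by (rule sf_ywin)
  have sF: "simple_function M F" unfolding F_def by (rule sf_ywin)
  have sQ: "simple_function M Q" unfolding Q_def by (rule sf_ywin)
  have FWV: "F w = W k w @ V w" for w
    unfolding F_def W_def V_def using ywin_append[of Y 1 k "L - k" w] kL by simp
  have QPW: "Q w = P L w @ W k w" for w
    unfolding Q_def P_def W_def using ywin_append[of Y "1 - int L" L k w] by simp
  have lenP: "length (P L w) = L" "length (W k w) = k" for w by (simp_all add: P_def W_def)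
  have ci2: "ent M (\<lambda>w. (P L w, (F w, R (int k) w), R 0 w)) + ent M (R 0)
      = ent M (\<lambda>w. (P L w, R 0 w)) + ent M (\<lambda>w. ((F w, R (int k) w), R 0 w))"
    unfolding P_def F_def by (rule ci_winR) (use k1 in auto)
  have ci3: "ent M (\<lambda>w. (Q w, V w, R (int k) w)) + ent M (R (int k))
      = ent M (\<lambda>w. (Q w, R (int k) w)) + ent M (\<lambda>w. (V w, R (int k) w))"
    unfolding Q_def V_def by (rule ci_win) auto
  have ci4: "ent M (\<lambda>w. (W k w, V w, R (int k) w)) + ent M (R (int k))
      = ent M (\<lambda>w. (W k w, R (int k) w)) + ent M (\<lambda>w. (V w, R (int k) w))"
    unfolding W_def V_def by (rule ci_win) auto
  have r1: "ent M (\<lambda>w. (P L w, R 0 w, F w, R (int k) w)) = ent M (\<lambda>w. (P L w, (F w, R (int k) w), R 0 w))"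
    by (rule ent_relabel[OF simple_function_Pair[OF sfP simple_function_Pair[OF simple_function_Pair[OF sF sfR] sfR]],
          where g="\<lambda>(p,(f,r),z). (p,z,f,r)" and h="\<lambda>(p,z,f,r). (p,(f,r),z)"]) auto
  have r2: "ent M (\<lambda>w. (R 0 w, F w, R (int k) w)) = ent M (\<lambda>w. ((F w, R (int k) w), R 0 w))"
    by (rule ent_relabel[OF simple_function_Pair[OF simple_function_Pair[OF sF sfR] sfR],
          where g="\<lambda>((f,r),z). (z,f,r)" and h="\<lambda>(z,f,r). ((f,r),z)"]) auto
  have r3: "ent M (\<lambda>w. (P L w, F w, R (int k) w)) = ent M (\<lambda>w. (Q w, V w, R (int k) w))"
    by (rule ent_relabel[OF simple_function_Pair[OF sQ simple_function_Pair[OF sV sfR]],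
          where g="\<lambda>(q,v,r). (take L q, drop L q @ v, r)" and h="\<lambda>(p,f,r). (p @ take k f, drop k f, r)"])
       (auto simp: FWV QPW lenP)
  have r4: "ent M (\<lambda>w. (F w, R (int k) w)) = ent M (\<lambda>w. (W k w, V w, R (int k) w))"
    by (rule ent_relabel[OF simple_function_Pair[OF sfW simple_function_Pair[OF sV sfR]],
          where g="\<lambda>(x,v,r). (x @ v, r)" and h="\<lambda>(f,r). (take k f, drop k f, r)"])
       (auto simp: FWV lenP)
  have i1: "1 - int (L + k) + int k = 1 - int L" by simp
  have s1: "ent M (\<lambda>w. (Q w, R (int k) w)) = ent M (\<lambda>w. (P (L + k) w, R 0 w))"
    using ent_shift_ywinR[of "1 - int (L + k)" k "L + k" 0, unfolded i1] by (simp add: Q_def P_def)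
  have s2: "ent M Q = ent M (P (L + k))"
    using ent_shift_ywin[of "1 - int (L + k)" k "L + k", unfolded i1] by (simp add: Q_def P_def)
  have r5: "ent M Q = ent M (\<lambda>w. (P L w, W k w))"
    by (rule ent_relabel[OF simple_function_Pair[OF sfP sfW], where g="\<lambda>(p,x). p @ x" and h="\<lambda>q. (take L q, drop L q)"])
       (auto simp: QPW lenP)
  have r6: "ent M (\<lambda>w. (W k w, P L w)) = ent M (\<lambda>w. (P L w, W k w))" by (rule ent_swap[OF sfW sfP])
  have r7: "ent M (\<lambda>w. (R 0 w, P m w)) = ent M (\<lambda>w. (P m w, R 0 w))" for m by (rule ent_swap[OF sfR sfP])
  show ?thesis
    unfolding cmi_def cond_ent_def g_def F_def[symmetric]
    using ci2 ci3 ci4 r1 r2 r3 r4 s1 s2 r5 r6 r7[of L] r7[of "L+k"] by simp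
qed

lemma idLHS:
  "cond_ent M (R 0) (\<lambda>w. (W k w, R (int k) w)) - cond_ent M (R (int k)) (\<lambda>w. (W k w, R 0 w))
   = ent M (\<lambda>w. (W k w, R 0 w)) - ent M (\<lambda>w. (W k w, R (int k) w))"
proof -
  have "ent M (\<lambda>w. (R 0 w, W k w, R (int k) w)) = ent M (\<lambda>w. (R (int k) w, W k w, R 0 w))"
    by (rule ent_relabel[OF simple_function_Pair[OF sfR simple_function_Pair[OF sfW sfR]],
          where g="\<lambda>(a,x,b). (b,x,a)" and h="\<lambda>(a,x,b). (b,x,a)"]) auto
  then show ?thesis unfolding cond_ent_def by simp
qed

end

context prob_space begin

lemma ent_const: "ent M (\<lambda>w. c) = 0"
proof -
  have "space M \<noteq> {}" using not_empty .
  then have "(\<lambda>w. c) ` space M = {c}" by auto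
  moreover have "pr M (\<lambda>w. c) c = 1" unfolding pr_def by (simp add: prob_space)
  ultimately show ?thesis unfolding ent_pr by simp
qed

lemma pr_Xs_prod:
  fixes X :: "nat \<Rightarrow> 'a \<Rightarrow> 'x"
  assumes ind: "indep_vars (\<lambda>_. count_space UNIV) X {1..k}" and n: "1 \<le> n" "n \<le> k" and len: "length xs = n"
  shows "pr M (\<lambda>w. map (\<lambda>i. X (Suc i) w) [0..<n]) xs = (\<Prod>j\<in>{1..n}. pr M (X j) (xs ! (j - 1)))"
proof -
  have eq: "(\<lambda>w. map (\<lambda>i. X (Suc i) w) [0..<n]) -` {xs} \<inter> space M = (\<Inter>j\<in>{1..n}. X j -` {xs ! (j - 1)} \<inter> space M)"
  proof (intro set_eqI iffI)
    fix w assume "w \<in> (\<lambda>w. map (\<lambda>i. X (Suc i) w) [0..<n]) -` {xs} \<inter> space M"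
    then have w: "w \<in> space M" "map (\<lambda>i. X (Suc i) w) [0..<n] = xs" by auto
    show "w \<in> (\<Inter>j\<in>{1..n}. X j -` {xs ! (j - 1)} \<inter> space M)"
    proof (intro INT_I)
      fix j assume j: "j \<in> {1..n}"
      then have "xs ! (j - 1) = X (Suc (j - 1)) w" using w(2)[symmetric] by auto
      then show "w \<in> X j -` {xs ! (j - 1)} \<inter> space M" using j w(1) by auto
    qed
  next
    fix w assume w: "w \<in> (\<Inter>j\<in>{1..n}. X j -` {xs ! (j - 1)} \<inter> space M)"
    then have ws: "w \<in> space M" using n by auto
    have "\<forall>i<n. X (Suc i) w = xs ! i"
    proof (intro allI impI)
      fix i assume "i < n"
      then have "Suc i \<in> {1..n}" by auto
      then show "X (Suc i) w = xs ! i" using w by force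
    qed
    then have "map (\<lambda>i. X (Suc i) w) [0..<n] = xs" using len by (intro nth_equalityI) auto
    then show "w \<in> (\<lambda>w. map (\<lambda>i. X (Suc i) w) [0..<n]) -` {xs} \<inter> space M" using ws by auto
  qed
  show ?thesis unfolding pr_def eq
    by (rule indep_varsD[OF ind]) (use n in auto)
qed

lemma ent_Xs:
  fixes X :: "nat \<Rightarrow> 'a \<Rightarrow> 'x::finite"
  assumes meas: "\<forall>i\<in>{1..k}. X i \<in> measurable M (count_space UNIV)"
    and dist: "\<forall>i\<in>{1..k}. distr M (count_space UNIV) (X i) = distr M (count_space UNIV) (X 1)"
    and ind: "indep_vars (\<lambda>_. count_space UNIV) X {1..k}"
    and n: "n \<le> k"
  shows "ent M (\<lambda>w. map (\<lambda>i. X (Suc i) w) [0..<n]) = real n * ent M (X 1)"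
  using n
proof (induction n)
  case 0 then show ?case by (simp add: ent_const)
next
  case (Suc n)
  let ?Xs = "\<lambda>n w. map (\<lambda>i. X (Suc i) w) [0..<n]"
  have sX: "simple_function M (X (Suc n))" using meas Suc.prems by (intro sf_fin) auto
  have sX1: "simple_function M (X 1)" using meas Suc.prems by (intro sf_fin) auto
  have sXs: "simple_function M (?Xs n)" using meas Suc.prems by (intro sf_list) auto
  have r: "ent M (?Xs (Suc n)) = ent M (\<lambda>w. (?Xs n w, X (Suc n) w))"
    by (rule ent_relabel[OF simple_function_Pair[OF sXs sX], where g="\<lambda>(xs, x). xs @ [x]" and h="\<lambda>xs. (butlast xs, last xs)"]) auto
  have fac: "pr M (\<lambda>w. (?Xs n w, X (Suc n) w)) (xs, x) = pr M (?Xs n) xs * pr M (X (Suc n)) x" for xs x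
  proof (cases "length xs = n")
    case False
    then have "(\<lambda>w. (?Xs n w, X (Suc n) w)) -` {(xs, x)} \<inter> space M = {}" "?Xs n -` {xs} \<inter> space M = {}" by auto
    then show ?thesis unfolding pr_def by simp
  next
    case True
    have e: "(\<lambda>w. (?Xs n w, X (Suc n) w)) -` {(xs, x)} \<inter> space M = ?Xs (Suc n) -` {xs @ [x]} \<inter> space M" by auto
    show ?thesis
    proof (cases "n = 0")
      case True
      with \<open>length xs = n\<close> have "xs = []" by simp
      then show ?thesis using True unfolding pr_def by (simp add: prob_space vimage_def Int_def)
    next
      case False
      have p1: "pr M (?Xs (Suc n)) (xs @ [x]) = (\<Prod>j\<in>{1..Suc n}. pr M (X j) ((xs @ [x]) ! (j - 1)))"
        by (rule pr_Xs_prod[OF ind]) (use Suc.prems \<open>length xs = n\<close> in auto)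
      have p2: "pr M (?Xs n) xs = (\<Prod>j\<in>{1..n}. pr M (X j) (xs ! (j - 1)))"
        by (rule pr_Xs_prod[OF ind]) (use Suc.prems \<open>length xs = n\<close> False in auto)
      have "(\<Prod>j\<in>{1..Suc n}. pr M (X j) ((xs @ [x]) ! (j - 1)))
          = (\<Prod>j\<in>{1..n}. pr M (X j) ((xs @ [x]) ! (j - 1))) * pr M (X (Suc n)) x"
        using \<open>length xs = n\<close> by (simp add: prod.cl_ivl_Suc nth_append)
      also have "(\<Prod>j\<in>{1..n}. pr M (X j) ((xs @ [x]) ! (j - 1))) = (\<Prod>j\<in>{1..n}. pr M (X j) (xs ! (j - 1)))"
        using \<open>length xs = n\<close> by (intro prod.cong) (auto simp: nth_append)
      finally show ?thesis unfolding pr_def[of M "\<lambda>w. (?Xs n w, X (Suc n) w)"] e using p1 p2 unfolding pr_def by simp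
    qed
  qed
  have i: "ent M (\<lambda>w. (?Xs n w, X (Suc n) w)) = ent M (?Xs n) + ent M (X (Suc n))"
    by (rule ent_indep[OF sXs sX fac])
  have d: "ent M (X (Suc n)) = ent M (X 1)"
    by (rule ent_distr[OF sX sX1], rule dist[rule_format]) (use Suc.prems in simp)
  show ?case using r i d Suc by (simp add: algebra_simps)
qed

end

lemma map_upt_shift1: "map f [1..<k+1] = map (\<lambda>i. f (Suc i)) [0..<k]"
proof -
  have "[1..<k+1] = map Suc [0..<k]" by (simp add: map_Suc_upt)
  then show ?thesis by simp
qed

theorem theorem1:
  fixes M :: "'w measure"
    and Y :: "int \<Rightarrow> 'w \<Rightarrow> 'y::finite"
    and R :: "int \<Rightarrow> 'w \<Rightarrow> 'r::finite"
    and k :: nat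
  assumes "prob_space M"
    and "\<And>t. Y t \<in> measurable M (count_space UNIV)"
    and "\<And>t. R t \<in> measurable M (count_space UNIV)"
    and "jointly_stationary M Y R"
    and "generator_cond M Y R"
    and "k \<ge> 1"
  shows "(cond_ent M (R 0) (\<lambda>w. (ywin Y 1 k w, R (int k) w))
           - cond_ent M (R (int k)) (\<lambda>w. (ywin Y 1 k w, R 0 w))
           + oracular_info M Y R k
         = discarded_cryptic M Y R k)
       \<and> (\<forall>X :: nat \<Rightarrow> 'w \<Rightarrow> 'x::finite.
           (\<forall>i\<in>{1..k}. X i \<in> measurable M (count_space UNIV))
         \<and> (\<forall>i\<in>{1..k}. distr M (count_space UNIV) (X i) = distr M (count_space UNIV) (X 1))
         \<and> prob_space.indep_vars M (\<lambda>_. count_space UNIV) X {1..k}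
         \<and> indep_disc M (R 0) (\<lambda>w. map (\<lambda>i. X i w) [1..<k+1])
         \<longrightarrow>
           ent M (\<lambda>w. (R 0 w, map (\<lambda>i. X i w) [1..<k+1])) - ent M (\<lambda>w. (R (int k) w, ywin Y 1 k w))
             = real k * (ent M (X 1) - entropy_rate M Y) + discarded_cryptic M Y R k
         \<and> ent M (\<lambda>w. (R 0 w, map (\<lambda>i. X i w) [1..<k+1])) - ent M (\<lambda>w. (R (int k) w, ywin Y 1 k w))
             \<ge> real k * (ent M (X 1) - entropy_rate M Y))"
proof -
  have G: "gen M Y R"
    by (rule gen.intro[OF assms(1)], rule gen_axioms.intro) (use assms in auto)
  interpret gen M Y R by (rule G)
  have k1: "1 \<le> k" using assms(6) .
  obtain lg where hg: "g \<longlonglongrightarrow> lg" using g_conv by blast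
  obtain lc where hc: "c \<longlonglongrightarrow> lc" using c_conv by blast
  define a where "a L = cond_ent M (W k) (P L)" for L
  have "(\<lambda>L. \<Sum>j<k. c (L + j)) \<longlonglongrightarrow> (\<Sum>j<k. lc)"
    by (intro tendsto_sum LIMSEQ_ignore_initial_segment hc)
  then have ha: "a \<longlonglongrightarrow> real k * lc" unfolding a_def idC by simp
  define C0 where "C0 = ent M (\<lambda>w. (W k w, R 0 w))"
  define Ck where "Ck = ent M (\<lambda>w. (W k w, R (int k) w))"
  have orc: "oracular_info M Y R k = real k * lc - C0 + ent M (R 0)"
  proof -
    have "(\<lambda>L. cmi M (ywin Y 1 k) (R 0) (ywin Y (1 - int L) L)) = (\<lambda>L. a L - C0 + ent M (R 0))"
      using idA[of k] unfolding a_def C0_def W_def P_def by simp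
    moreover have "(\<lambda>L. a L - C0 + ent M (R 0)) \<longlonglongrightarrow> real k * lc - C0 + ent M (R 0)"
      by (intro tendsto_intros ha)
    ultimately show ?thesis unfolding oracular_info_def by (simp add: limI)
  qed
  define s where "s L = cmi M (ywin Y (1 - int L) L) (R 0) (\<lambda>w. (ywin Y 1 L w, R (int k) w))" for L
  have hs: "s \<longlonglongrightarrow> real k * lc - Ck + ent M (R 0)"
  proof (rule LIMSEQ_offset[where k=k])
    have "s (L + k) = a (L + k) + g (L + k + k) - g (L + k) - Ck + ent M (R 0)" for L
      unfolding s_def a_def Ck_def P_def[symmetric] using idB[of k "L + k"] k1 by simp
    moreover have "(\<lambda>L. a (L + k) + g (L + k + k) - g (L + k) - Ck + ent M (R 0))
        \<longlonglongrightarrow> real k * lc + lg - lg - Ck + ent M (R 0)"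
      by (intro tendsto_intros LIMSEQ_ignore_initial_segment ha hg)
    ultimately show "(\<lambda>L. s (L + k)) \<longlonglongrightarrow> real k * lc - Ck + ent M (R 0)" by simp
  qed
  have dc: "discarded_cryptic M Y R k = real k * lc - Ck + ent M (R 0)"
    unfolding discarded_cryptic_def s_def[symmetric] by (rule limI[OF hs])
  have dc0: "0 \<le> discarded_cryptic M Y R k"
  proof -
    have "0 \<le> s L" for L unfolding s_def
      by (rule cmi_nonneg[OF sf_ywin sfR simple_function_Pair[OF sf_ywin sfR]])
    then show ?thesis unfolding discarded_cryptic_def s_def[symmetric] limI[OF hs]
      by (intro LIMSEQ_le_const[OF hs]) auto
  qed
  have er: "entropy_rate M Y = lc"
    unfolding entropy_rate_def using limI[OF hc] unfolding c_def P_def .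
  have part1: "cond_ent M (R 0) (\<lambda>w. (ywin Y 1 k w, R (int k) w))
           - cond_ent M (R (int k)) (\<lambda>w. (ywin Y 1 k w, R 0 w))
           + oracular_info M Y R k = discarded_cryptic M Y R k"
    using idLHS[of k] unfolding W_def orc dc C0_def Ck_def by simp
  have part2: "ent M (\<lambda>w. (R 0 w, map (\<lambda>i. X i w) [1..<k+1])) - ent M (\<lambda>w. (R (int k) w, ywin Y 1 k w))
             = real k * (ent M (X 1) - entropy_rate M Y) + discarded_cryptic M Y R k"
    if meas: "\<forall>i\<in>{1..k}. X i \<in> measurable M (count_space UNIV)"
      and dist: "\<forall>i\<in>{1..k}. distr M (count_space UNIV) (X i) = distr M (count_space UNIV) (X 1)"
      and ind: "indep_vars (\<lambda>_. count_space UNIV) X {1..k}"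
      and idr: "indep_disc M (R 0) (\<lambda>w. map (\<lambda>i. X i w) [1..<k+1])"
    for X :: "nat \<Rightarrow> 'w \<Rightarrow> 'x::finite"
  proof -
    define Xs where "Xs w = map (\<lambda>i. X i w) [1..<k+1]" for w
    have Xs_eq: "Xs = (\<lambda>w. map (\<lambda>i. X (Suc i) w) [0..<k])"
      unfolding Xs_def map_upt_shift1 ..
    have sXs: "simple_function M Xs" unfolding Xs_eq using meas by (intro sf_list) auto
    have eXs: "ent M Xs = real k * ent M (X 1)"
      unfolding Xs_eq by (rule ent_Xs[OF meas dist ind order_refl])
    have fac: "pr M (\<lambda>w. (R 0 w, Xs w)) (u, v) = pr M (R 0) u * pr M Xs v" for u v
    proof -
      have "measure M {w \<in> space M. R 0 w = u \<and> Xs w = v}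
          = measure M {w \<in> space M. R 0 w = u} * measure M {w \<in> space M. Xs w = v}"
        using idr unfolding indep_disc_def Xs_def by blast
      moreover have "{w \<in> space M. R 0 w = u \<and> Xs w = v} = (\<lambda>w. (R 0 w, Xs w)) -` {(u, v)} \<inter> space M" by auto
      moreover have "{w \<in> space M. R 0 w = u} = R 0 -` {u} \<inter> space M" by auto
      moreover have "{w \<in> space M. Xs w = v} = Xs -` {v} \<inter> space M" by auto
      ultimately show ?thesis unfolding pr_def by simp
    qed
    have e1: "ent M (\<lambda>w. (R 0 w, Xs w)) = ent M (R 0) + real k * ent M (X 1)"
      using ent_indep[OF sfR sXs fac] eXs by simp
    have e2: "ent M (\<lambda>w. (R (int k) w, ywin Y 1 k w)) = Ck"
      unfolding Ck_def W_def by (rule ent_swap[OF sfR sf_ywin])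
    show ?thesis using e1 e2 unfolding Xs_def er dc by (simp add: algebra_simps)
  qed
  show ?thesis
  proof (intro conjI allI impI)
    show "cond_ent M (R 0) (\<lambda>w. (ywin Y 1 k w, R (int k) w))
           - cond_ent M (R (int k)) (\<lambda>w. (ywin Y 1 k w, R 0 w))
           + oracular_info M Y R k = discarded_cryptic M Y R k" by (rule part1)
  next
    fix X :: "nat \<Rightarrow> 'w \<Rightarrow> 'x::finite"
    assume h: "(\<forall>i\<in>{1..k}. X i \<in> measurable M (count_space UNIV))
         \<and> (\<forall>i\<in>{1..k}. distr M (count_space UNIV) (X i) = distr M (count_space UNIV) (X 1))
         \<and> prob_space.indep_vars M (\<lambda>_. count_space UNIV) X {1..k}
         \<and> indep_disc M (R 0) (\<lambda>w. map (\<lambda>i. X i w) [1..<k+1])"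
    then have eq: "ent M (\<lambda>w. (R 0 w, map (\<lambda>i. X i w) [1..<k+1])) - ent M (\<lambda>w. (R (int k) w, ywin Y 1 k w))
             = real k * (ent M (X 1) - entropy_rate M Y) + discarded_cryptic M Y R k"
      using part2 by blast
    show "ent M (\<lambda>w. (R 0 w, map (\<lambda>i. X i w) [1..<k+1])) - ent M (\<lambda>w. (R (int k) w, ywin Y 1 k w))
             = real k * (ent M (X 1) - entropy_rate M Y) + discarded_cryptic M Y R k" by (rule eq)
    show "ent M (\<lambda>w. (R 0 w, map (\<lambda>i. X i w) [1..<k+1])) - ent M (\<lambda>w. (R (int k) w, ywin Y 1 k w))
             \<ge> real k * (ent M (X 1) - entropy_rate M Y)" using eq dc0 by simp
  qed
qed


end
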